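(* There is an injective ring homomorphism $\iota:\Lambda_0\to\mathcal C(\mathbb Z_p,A_{\mathfrak p})$ induced by $[u]\mapsto(s\mapsto u^s)$ for $u\in1+\mathfrak pA_{\mathfrak p}$ and extended $A_{\mathfrak p}$-linearly. Moreover, for every dense subset $I\subset\mathbb Z_p$, the set of ideals $\{P_k\}_{k\in I}$ is Zariski dense in $\Lambda_0$ (i.e. $\bigcap_{k\in I}P_k=0$).
   Context: $A=\mathbb F_q[T]$ with $q$ a power of the prime $p$, $\varpi$ monic irreducible, $\mathfrak p=(\varpi)$, $A_{\mathfrak p}$ the completion. $\Lambda_0=A_{\mathfrak p}\llbracket1+\mathfrak pA_{\mathfrak p}\rrbracket=\varprojlim_mA_{\mathfrak p}/\mathfrak p^m[(1+\mathfrak p)/(1+\mathfrak p^m)]$ is the Iwasawa algebra of the pro-$p$ group $1+\mathfrak pA_{\mathfrak p}$ (a $\mathbb Z_p$-module, so $u^s$ makes sense for $s\in\mathbb Z_p$). $\mathcal C(\mathbb Z_p,A_{\mathfrak p})$ is the ring of continuous functions $\mathbb Z_p\to A_{\mathfrak p}$. For $k\in\mathbb Z_p$, $P_k=\ker(f_k)$ where $f_k:\Lambda_0\to A_{\mathfrak p}$ is the continuous $A_{\mathfrak p}$-algebra map with $[u]\mapsto u^k$. *)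

theory Defs
  imports "HOL-Computational_Algebra.Polynomial" "HOL-Algebra.Ring" "HOL-Algebra.RingHom"
begin

text \<open>
  Conventions.  F_q is a finite field type 'k; A = F_q[T] is 'k poly; the characteristic
  p is CHAR('k).  The prime w (varpi) is a monic irreducible polynomial.

  * A_p (completion of A at w) = inverse limit of A / w^m, represented by compatible
    sequences of canonical residues  x :: nat => 'k poly  with  x m = x m mod w^m  and
    x m = x (Suc m) mod w^m.
  * Z_p = inverse limit of Z / p^n, represented by compatible sequences of residues
    z :: nat => nat with z n < p^n and z n = z (Suc n) mod p^n.
  * (1+w)/(1+w^m) is represented by canonical residues g mod w^m with g = 1 mod w.
  * Lambda_0 = inverse limit over m of (A/w^m)[(1+w)/(1+w^m)], an element being a
    compatible family of finitely supported coefficient functions.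
\<close>

definition Ap_carrier :: "'k::{finite,field} poly \<Rightarrow> (nat \<Rightarrow> 'k poly) set" where
  "Ap_carrier w = {x. \<forall>m. x m mod w ^ m = x m \<and> x (Suc m) mod w ^ m = x m}"

definition ap_zero :: "nat \<Rightarrow> 'k::{finite,field} poly" where
  "ap_zero = (\<lambda>m. 0)"

definition ap_one :: "'k::{finite,field} poly \<Rightarrow> nat \<Rightarrow> 'k poly" where
  "ap_one w = (\<lambda>m. 1 mod w ^ m)"

definition ap_add :: "'k::{finite,field} poly \<Rightarrow> (nat \<Rightarrow> 'k poly) \<Rightarrow> (nat \<Rightarrow> 'k poly) \<Rightarrow> nat \<Rightarrow> 'k poly" where
  "ap_add w x y = (\<lambda>m. (x m + y m) mod w ^ m)"

definition ap_mult :: "'k::{finite,field} poly \<Rightarrow> (nat \<Rightarrow> 'k poly) \<Rightarrow> (nat \<Rightarrow> 'k poly) \<Rightarrow> nat \<Rightarrow> 'k poly" where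
  "ap_mult w x y = (\<lambda>m. (x m * y m) mod w ^ m)"

definition U1 :: "'k::{finite,field} poly \<Rightarrow> (nat \<Rightarrow> 'k poly) set" where
  "U1 w = {u \<in> Ap_carrier w. u 1 = 1 mod w}"

definition Zp :: "nat \<Rightarrow> (nat \<Rightarrow> nat) set" where
  "Zp p = {z. \<forall>n. z n < p ^ n \<and> z (Suc n) mod p ^ n = z n}"

text \<open>Density for the p-adic topology (basic opens: {t. t n = s n}).\<close>
definition dense_in_Zp :: "nat \<Rightarrow> (nat \<Rightarrow> nat) set \<Rightarrow> bool" where
  "dense_in_Zp p I \<longleftrightarrow> I \<subseteq> Zp p \<and> (\<forall>s\<in>Zp p. \<forall>n. \<exists>k\<in>I. k n = s n)"

text \<open>u^s for u in 1 + p A_p and s in Z_p: the m-th component is (u_m)^(s_m) mod w^m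
  (well defined since (1+w)/(1+w^m) has exponent dividing p^m).\<close>
definition upow :: "'k::{finite,field} poly \<Rightarrow> (nat \<Rightarrow> 'k poly) \<Rightarrow> (nat \<Rightarrow> nat) \<Rightarrow> nat \<Rightarrow> 'k poly" where
  "upow w u s = (\<lambda>m. (u m) ^ (s m) mod w ^ m)"

definition Gm :: "'k::{finite,field} poly \<Rightarrow> nat \<Rightarrow> 'k poly set" where
  "Gm w m = {g. g mod w ^ m = g \<and> g mod w = 1 mod w}"

definition Lambda0_carrier :: "'k::{finite,field} poly \<Rightarrow> (nat \<Rightarrow> 'k poly \<Rightarrow> 'k poly) set" where
  "Lambda0_carrier w = {lam.
      (\<forall>m g. g \<notin> Gm w m \<longrightarrow> lam m g = 0) \<and>
      (\<forall>m g. lam m g mod w ^ m = lam m g) \<and>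
      (\<forall>m. \<forall>g\<in>Gm w m.
          lam m g = (\<Sum>h\<in>{h\<in>Gm w (Suc m). h mod w ^ m = g}. lam (Suc m) h) mod w ^ m)}"

definition Lambda0 :: "'k::{finite,field} poly \<Rightarrow> (nat \<Rightarrow> 'k poly \<Rightarrow> 'k poly) ring" where
  "Lambda0 w = \<lparr> carrier = Lambda0_carrier w,
     mult = (\<lambda>lam mu. \<lambda>m g. if g \<in> Gm w m then
               (\<Sum>a\<in>Gm w m. \<Sum>b\<in>Gm w m.
                   if (a * b) mod w ^ m = g then lam m a * mu m b else 0) mod w ^ m
             else 0),
     one = (\<lambda>m g. if g \<in> Gm w m \<and> g = 1 mod w ^ m then 1 mod w ^ m else 0),
     zero = (\<lambda>m g. 0),
     add = (\<lambda>lam mu. \<lambda>m g. (lam m g + mu m g) mod w ^ m) \<rparr>"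

definition grp :: "'k::{finite,field} poly \<Rightarrow> (nat \<Rightarrow> 'k poly) \<Rightarrow> nat \<Rightarrow> 'k poly \<Rightarrow> 'k poly" where
  "grp w u = (\<lambda>m g. if g \<in> Gm w m \<and> g = u m then 1 mod w ^ m else 0)"

definition lam_smult :: "'k::{finite,field} poly \<Rightarrow> (nat \<Rightarrow> 'k poly) \<Rightarrow> (nat \<Rightarrow> 'k poly \<Rightarrow> 'k poly) \<Rightarrow> nat \<Rightarrow> 'k poly \<Rightarrow> 'k poly" where
  "lam_smult w a lam = (\<lambda>m g. (a m * lam m g) mod w ^ m)"

definition CZ_carrier :: "'k::{finite,field} poly \<Rightarrow> ((nat \<Rightarrow> nat) \<Rightarrow> nat \<Rightarrow> 'k poly) set" where
  "CZ_carrier w = {f.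
      (\<forall>s\<in>Zp CHAR('k). f s \<in> Ap_carrier w) \<and>
      (\<forall>s. s \<notin> Zp CHAR('k) \<longrightarrow> f s = ap_zero) \<and>
      (\<forall>s\<in>Zp CHAR('k). \<forall>m. \<exists>n. \<forall>t\<in>Zp CHAR('k). t n = s n \<longrightarrow> f t m = f s m)}"

definition CZ :: "'k::{finite,field} poly \<Rightarrow> ((nat \<Rightarrow> nat) \<Rightarrow> nat \<Rightarrow> 'k poly) ring" where
  "CZ w = \<lparr> carrier = CZ_carrier w,
     mult = (\<lambda>f h s. if s \<in> Zp CHAR('k) then ap_mult w (f s) (h s) else ap_zero),
     one = (\<lambda>s. if s \<in> Zp CHAR('k) then ap_one w else ap_zero),
     zero = (\<lambda>s. ap_zero),
     add = (\<lambda>f h s. if s \<in> Zp CHAR('k) then ap_add w (f s) (h s) else ap_zero) \<rparr>"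

definition cz_smult :: "'k::{finite,field} poly \<Rightarrow> (nat \<Rightarrow> 'k poly) \<Rightarrow> ((nat \<Rightarrow> nat) \<Rightarrow> nat \<Rightarrow> 'k poly) \<Rightarrow> (nat \<Rightarrow> nat) \<Rightarrow> nat \<Rightarrow> 'k poly" where
  "cz_smult w a f = (\<lambda>s. if s \<in> Zp CHAR('k) then ap_mult w a (f s) else ap_zero)"

text \<open>f_k : Lambda_0 -> A_p, the continuous A_p-algebra map with [u] |-> u^k; on level m
  it sends sum_g c_g [g] to sum_g c_g g^(k_m) mod w^m.\<close>
definition fk :: "'k::{finite,field} poly \<Rightarrow> (nat \<Rightarrow> nat) \<Rightarrow> (nat \<Rightarrow> 'k poly \<Rightarrow> 'k poly) \<Rightarrow> nat \<Rightarrow> 'k poly" where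
  "fk w k lam = (\<lambda>m. (\<Sum>g\<in>Gm w m. lam m g * g ^ (k m)) mod w ^ m)"

definition Pk :: "'k::{finite,field} poly \<Rightarrow> (nat \<Rightarrow> nat) \<Rightarrow> (nat \<Rightarrow> 'k poly \<Rightarrow> 'k poly) set" where
  "Pk w k = {lam \<in> Lambda0_carrier w. fk w k lam = ap_zero}"

definition iota :: "'k::{finite,field} poly \<Rightarrow> (nat \<Rightarrow> 'k poly \<Rightarrow> 'k poly) \<Rightarrow> (nat \<Rightarrow> nat) \<Rightarrow> nat \<Rightarrow> 'k poly" where
  "iota w lam = (\<lambda>s. if s \<in> Zp CHAR('k) then
                   (\<lambda>m. (\<Sum>g\<in>Gm w m. lam m g * g ^ (s m)) mod w ^ m) else ap_zero)"

end

theory Submission imports Defs "HOL-Computational_Algebra.Polynomial_Factorial" "HOL-Computational_Algebra.Primes" begin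

lemma finite_degree_less: "finite {g :: 'k::{finite,field} poly. degree g < n}"
proof -
  have "{g :: 'k poly. degree g < n} \<subseteq> Poly ` {xs. set xs \<subseteq> UNIV \<and> length xs = n}"
  proof
    fix g :: "'k poly" assume "g \<in> {g. degree g < n}"
    hence d: "degree g < n" by simp
    have "g = Poly (map (coeff g) [0..<n])"
    proof (rule poly_eqI)
      fix i
      show "coeff g i = coeff (Poly (map (coeff g) [0..<n])) i"
        using d by (auto simp: nth_default_def coeff_eq_0)
    qed
    thus "g \<in> Poly ` {xs. set xs \<subseteq> UNIV \<and> length xs = n}" by force
  qed
  moreover have "finite (Poly ` {xs :: 'k list. set xs \<subseteq> UNIV \<and> length xs = n})"
    by (intro finite_imageI finite_lists_length_eq) simp
  ultimately show ?thesis by (rule finite_subset)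
qed

lemma finite_mod_fixed:
  fixes d :: "'k::{finite,field} poly"
  assumes "d \<noteq> 0"
  shows "finite {g. g mod d = g}"
proof -
  have "{g. g mod d = g} \<subseteq> {g. degree g < degree d} \<union> {0}"
    using degree_mod_less'[OF assms] by (auto, metis)
  thus ?thesis using finite_degree_less by (rule finite_subset[OF _ finite_UnI]) simp
qed

lemma prime_CHAR_k: "prime CHAR('k::{finite,field})"
  by (intro prime_CHAR_semidom finite_imp_CHAR_pos) simp

lemma frob:
  fixes x y :: "'k::{finite,field} poly"
  shows "(x + y) ^ (CHAR('k) ^ n) = x ^ (CHAR('k) ^ n) + y ^ (CHAR('k) ^ n)"
  by (rule freshmans_dream') (auto simp: prime_CHAR_k)

lemma CHAR_gt1: "CHAR('k::{finite,field}) > 1"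
  using prime_CHAR_k[where 'k='k] prime_gt_1_nat by blast

lemma le_CHAR_pow: "n \<le> CHAR('k::{finite,field}) ^ n"
  using CHAR_gt1[where 'k='k] by (simp add: less_imp_le_nat less_exp)

lemma frob_dvd:
  fixes h w :: "'k::{finite,field} poly"
  assumes "w dvd h - 1"
  shows "w ^ N dvd h ^ (CHAR('k) ^ N) - 1"
proof -
  have "h ^ (CHAR('k) ^ N) = (1 + (h - 1)) ^ (CHAR('k) ^ N)" by simp
  also have "\<dots> = 1 + (h - 1) ^ (CHAR('k) ^ N)" by (simp only: frob power_one)
  finally have "h ^ (CHAR('k) ^ N) - 1 = (h - 1) ^ (CHAR('k) ^ N)" by simp
  moreover have "w ^ N dvd (h - 1) ^ N" using assms by (simp add: dvd_power_same)
  moreover have "(h - 1) ^ N dvd (h - 1) ^ (CHAR('k) ^ N)" by (rule le_imp_power_dvd[OF le_CHAR_pow])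
  ultimately show ?thesis using dvd_trans by metis
qed

lemma pow_reduce:
  fixes h w :: "'k::{finite,field} poly"
  assumes "w dvd h - 1"
  shows "w ^ N dvd h ^ j - h ^ (j mod CHAR('k) ^ N)"
proof -
  let ?q = "CHAR('k) ^ N"
  have "(h ^ ?q) mod w ^ N = 1 mod w ^ N" using frob_dvd[OF assms] by (simp add: mod_eq_dvd_iff)
  hence "(h ^ ?q) ^ (j div ?q) mod w ^ N = 1 mod w ^ N"
    by (metis power_mod power_one)
  hence "(h ^ ?q) ^ (j div ?q) * h ^ (j mod ?q) mod w ^ N = 1 * h ^ (j mod ?q) mod w ^ N"
    by (metis mod_mult_left_eq)
  moreover have "h ^ j = (h ^ ?q) ^ (j div ?q) * h ^ (j mod ?q)"
    by (metis div_mult_mod_eq power_add power_mult mult.commute)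
  ultimately show ?thesis by (simp add: mod_eq_dvd_iff)
qed


lemma dvd_diff_trans:
  fixes a b c :: "'a::comm_ring_1"
  shows "w dvd a - b \<Longrightarrow> w dvd b - c \<Longrightarrow> w dvd a - c"
proof -
  assume "w dvd a - b" "w dvd b - c"
  moreover have "a - c = (a - b) + (b - c)" by simp
  ultimately show ?thesis by (metis dvd_add)
qed

lemma dvd_mod_diff:
  fixes h d :: "'k::{finite,field} poly"
  shows "d dvd h mod d - h"
  by (simp add: mod_eq_dvd_iff[symmetric])

definition phi :: "'k::{finite,field} poly \<Rightarrow> ('k poly \<Rightarrow> 'k poly) \<Rightarrow> bool" where
  "phi w f \<longleftrightarrow> (\<exists>P e. \<forall>t. poly P t = w ^ e * f t)"

lemma phi_const: "phi w (\<lambda>t. c)"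
  unfolding phi_def by (intro exI[of _ "[:c:]"] exI[of _ 0]) simp

lemma phi_id: "phi w (\<lambda>t. t)"
  unfolding phi_def by (intro exI[of _ "[:0, 1:]"] exI[of _ 0]) simp

lemma phi_add: "phi w f \<Longrightarrow> phi w g \<Longrightarrow> phi w (\<lambda>t. f t + g t)"
proof -
  assume "phi w f" "phi w g"
  then obtain P e Q d where P: "\<And>t. poly P t = w ^ e * f t" and Q: "\<And>t. poly Q t = w ^ d * g t"
    unfolding phi_def by blast
  have "poly (smult (w ^ d) P + smult (w ^ e) Q) t = w ^ (e + d) * (f t + g t)" for t
    by (simp add: P Q algebra_simps power_add)
  thus ?thesis unfolding phi_def by blast
qed

lemma phi_mult: "phi w f \<Longrightarrow> phi w g \<Longrightarrow> phi w (\<lambda>t. f t * g t)"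
proof -
  assume "phi w f" "phi w g"
  then obtain P e Q d where P: "\<And>t. poly P t = w ^ e * f t" and Q: "\<And>t. poly Q t = w ^ d * g t"
    unfolding phi_def by blast
  have "poly (P * Q) t = w ^ (e + d) * (f t * g t)" for t
    by (simp add: P Q algebra_simps power_add)
  thus ?thesis unfolding phi_def by blast
qed

lemma phi_diff: "phi w f \<Longrightarrow> phi w g \<Longrightarrow> phi w (\<lambda>t. f t - g t)"
proof -
  assume "phi w f" "phi w g"
  hence "phi w (\<lambda>t. f t + (-1) * g t)" by (intro phi_add phi_mult phi_const)
  thus ?thesis by simp
qed

lemma phi_pow: "phi w f \<Longrightarrow> phi w (\<lambda>t. f t ^ n)"
proof (induction n)
  case 0 thus ?case using phi_const[of w 1] by simp
next
  case (Suc n)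
  hence "phi w (\<lambda>t. f t * f t ^ n)" by (intro phi_mult)
  thus ?case by simp
qed

lemma phi_div:
  assumes "phi w f" "\<And>t. w ^ k dvd f t"
  shows "phi w (\<lambda>t. f t div w ^ k)"
proof -
  obtain P e where P: "\<And>t. poly P t = w ^ e * f t" using assms(1) unfolding phi_def by blast
  have "poly P t = w ^ (e + k) * (f t div w ^ k)" for t
    using assms(2)[of t] by (simp add: P power_add)
  thus ?thesis unfolding phi_def by blast
qed

lemma phi_shift:
  assumes "phi w f"
  shows "phi w (\<lambda>t. f (t - a))"
proof -
  obtain P e where P: "\<And>t. poly P t = w ^ e * f t" using assms(1) unfolding phi_def by blast
  have "poly (pcompose P [:-a, 1:]) t = w ^ e * f (t - a)" for t
    by (simp add: poly_pcompose P)
  thus ?thesis unfolding phi_def by blast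
qed

definition ev :: "'k::{finite,field} poly \<Rightarrow> (nat \<Rightarrow> 'k poly \<Rightarrow> 'k poly) \<Rightarrow> nat \<Rightarrow> nat \<Rightarrow> 'k poly" where
  "ev w lam m j = (\<Sum>g\<in>Gm w m. lam m g * g ^ j)"

lemma iota_eq: "s \<in> Zp CHAR('k) \<Longrightarrow> iota w lam s = (\<lambda>m. ev w lam m (s m) mod w ^ m)"
  for w :: "'k::{finite,field} poly"
  by (simp add: iota_def ev_def)

lemma sum_dvd_diff:
  fixes f g :: "'b \<Rightarrow> 'a::comm_ring_1"
  shows "(\<And>x. x \<in> A \<Longrightarrow> d dvd f x - g x) \<Longrightarrow> d dvd sum f A - sum g A"
  by (simp add: sum_subtractf[symmetric] dvd_sum)

lemma mod_sum_mult_left: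
  fixes f y :: "'b \<Rightarrow> 'k::{finite,field} poly"
  shows "(\<Sum>g\<in>A. (f g mod W) * y g) mod W = (\<Sum>g\<in>A. f g * y g) mod W"
proof -
  have "(\<Sum>g\<in>A. (f g mod W) * y g) mod W = (\<Sum>g\<in>A. (f g mod W) * y g mod W) mod W"
    by (simp add: mod_sum_eq)
  also have "\<dots> = (\<Sum>g\<in>A. f g * y g mod W) mod W"
    by (simp add: mod_mult_left_eq)
  also have "\<dots> = (\<Sum>g\<in>A. f g * y g) mod W"
    by (simp add: mod_sum_eq)
  finally show ?thesis .
qed

lemma Zp_step: "s \<in> Zp p \<Longrightarrow> s (Suc m) mod p ^ m = s m"
  by (simp add: Zp_def)

lemma Zp_less: "s \<in> Zp p \<Longrightarrow> s m < p ^ m"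
  by (simp add: Zp_def)

context
  fixes w :: "'k::{finite,field} poly"
  assumes monic: "lead_coeff w = 1" and irr: "irreducible w"
begin

lemma w_nz: "w \<noteq> 0" using irr by auto

lemma deg_w: "degree w > 0"
  using irr w_nz is_unit_iff_degree by (auto simp: irreducible_def)

lemma one_mod_w: "1 mod w = 1"
  using deg_w by (intro mod_poly_less) simp

lemma wpow_nz: "w ^ m \<noteq> 0" using w_nz by simp

lemma one_mod_wpow: "m \<ge> 1 \<Longrightarrow> 1 mod w ^ m = 1"
  using deg_w by (intro mod_poly_less) (simp add: degree_power_eq w_nz)

lemma prime_w: "prime_elem w" using irr by (rule field_poly_irreducible_imp_prime)

lemma Gm0: "Gm w 0 = {}"
  using one_mod_w by (auto simp: Gm_def)

lemma Gm_pos: "g \<in> Gm w m \<Longrightarrow> m \<ge> 1"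
  using Gm0 by (cases m) auto

lemma Gm_iff: "m \<ge> 1 \<Longrightarrow> g \<in> Gm w m \<longleftrightarrow> g mod w ^ m = g \<and> w dvd g - 1"
  unfolding Gm_def using mod_eq_dvd_iff[of g w 1] by simp

lemma Gm_dvd: "g \<in> Gm w m \<Longrightarrow> w dvd g - 1"
  using Gm_iff Gm_pos by blast

lemma Gm_red: "g \<in> Gm w m \<Longrightarrow> g mod w ^ m = g"
  by (simp add: Gm_def)

lemma finite_Gm: "finite (Gm w m)"
  by (rule finite_subset[OF _ finite_mod_fixed[OF wpow_nz[of m]]]) (auto simp: Gm_def)

lemma Gm_proj: 
  assumes "h \<in> Gm w N" "m \<le> N" "m \<ge> 1"
  shows "h mod w ^ m \<in> Gm w m"
proof -
  have "w dvd h mod w ^ m - h"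
  proof -
    have "w dvd w ^ m" using assms(3) by (simp add: dvd_power)
    moreover have "w ^ m dvd h mod w ^ m - h" by (rule dvd_mod_diff)
    ultimately show ?thesis by (rule dvd_trans)
  qed
  hence "w dvd h mod w ^ m - 1" using Gm_dvd[OF assms(1)] by (rule dvd_diff_trans)
  thus ?thesis using assms(3) by (simp add: Gm_iff)
qed

lemma Gm_mult:
  assumes "a \<in> Gm w m" "b \<in> Gm w m"
  shows "a * b mod w ^ m \<in> Gm w m"
proof -
  have m: "m \<ge> 1" using Gm_pos assms(1) .
  have "w dvd a * b - 1"
  proof -
    have "a * b - 1 = (a - 1) * b + (b - 1)" by (simp add: algebra_simps)
    thus ?thesis using Gm_dvd[OF assms(1)] Gm_dvd[OF assms(2)] by (simp only:) (intro dvd_add dvd_mult2)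
  qed
  moreover have "w dvd a * b mod w ^ m - a * b"
  proof -
    have "w dvd w ^ m" using m by (simp add: dvd_power)
    moreover have "w ^ m dvd a * b mod w ^ m - a * b" by (rule dvd_mod_diff)
    ultimately show ?thesis by (rule dvd_trans)
  qed
  ultimately have "w dvd a * b mod w ^ m - 1" by (metis dvd_diff_trans)
  thus ?thesis using m by (simp add: Gm_iff)
qed


lemma mod1_iff: "(x mod w = 1 mod w) = (w dvd x - 1)"
  by (rule mod_eq_dvd_iff)

lemma order_exists:
  assumes "\<not> w dvd u"
  shows "\<exists>e>0. w dvd u ^ e - 1"
proof -
  let ?f = "\<lambda>n::nat. u ^ n mod w"
  have "?f ` UNIV \<subseteq> {g. g mod w = g}" by auto
  hence fin: "finite (?f ` UNIV)" using finite_mod_fixed[OF w_nz] finite_subset by blast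
  have "\<not> inj ?f"
  proof
    assume "inj ?f"
    hence "finite (UNIV :: nat set)" using fin finite_imageD by blast
    thus False by simp
  qed
  then obtain a b where ab: "?f a = ?f b" "a \<noteq> b" unfolding inj_def by blast
  obtain x y where xy: "?f x = ?f y" "x < y"
  proof (cases "a < b")
    case True thus ?thesis using that ab by blast
  next
    case False hence "b < a" using ab(2) by simp
    thus ?thesis using that ab by (metis)
  qed
  have "w dvd u ^ y - u ^ x" using xy(1) mod_eq_dvd_iff[of "u^y" w "u^x"] by simp
  moreover have "u ^ y - u ^ x = u ^ x * (u ^ (y - x) - 1)"
    using xy(2) by (simp add: algebra_simps flip: power_add)
  ultimately have "w dvd u ^ x * (u ^ (y - x) - 1)" by simp
  moreover have "\<not> w dvd u ^ x" using assms prime_w prime_elem_dvd_power by blast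
  ultimately have "w dvd u ^ (y - x) - 1" using prime_w prime_elem_dvd_mult_iff by blast
  thus ?thesis using xy(2) by (intro exI[of _ "y - x"]) simp
qed

lemma fermat_w: "\<exists>E>0. \<forall>u. \<not> w dvd u \<longrightarrow> w dvd u ^ E - 1"
proof -
  define R where "R = {r. r mod w = r \<and> \<not> w dvd r}"
  have finR: "finite R" unfolding R_def
    by (rule finite_subset[OF _ finite_mod_fixed[OF w_nz]]) auto
  have "\<forall>r\<in>R. \<exists>e. e > 0 \<and> w dvd r ^ e - 1" using order_exists by (auto simp: R_def)
  then obtain ef where ef: "\<And>r. r \<in> R \<Longrightarrow> ef r > 0 \<and> w dvd r ^ ef r - 1" by metis
  define E where "E = prod ef R"
  have Epos: "E > 0" unfolding E_def using ef by (simp add: finR)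
  have "\<not> w dvd u \<longrightarrow> w dvd u ^ E - 1" for u
  proof
    assume nd: "\<not> w dvd u"
    let ?r = "u mod w"
    have rR: "?r \<in> R" using nd by (auto simp: R_def dvd_eq_mod_eq_0)
    have "ef ?r dvd E" unfolding E_def using finR rR by (simp add: dvd_prodI)
    then obtain k where k: "E = ef ?r * k" by (auto elim: dvdE)
    have "(?r ^ ef ?r) mod w = 1 mod w" using ef[OF rR] by (simp add: mod1_iff)
    hence "(?r ^ ef ?r) ^ k mod w = 1 mod w" by (metis power_mod power_one)
    hence "?r ^ E mod w = 1 mod w" by (simp add: k power_mult)
    hence "u ^ E mod w = 1 mod w" by (simp add: power_mod)
    thus "w dvd u ^ E - 1" by (simp add: mod1_iff)
  qed
  thus ?thesis using Epos by blast
qed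


lemma dvd_pow_frob: "w dvd x \<Longrightarrow> w ^ K dvd x ^ (CHAR('k) ^ K)"
  by (metis dvd_power_same dvd_trans le_imp_power_dvd le_CHAR_pow)

lemma boost:
  assumes "phi w F" "\<And>t. w dvd F t - ind t" "\<And>t. ind t = 0 \<or> ind t = 1"
  shows "\<exists>f. phi w f \<and> (\<forall>t. w ^ K dvd f t - ind t)"
proof (intro exI conjI allI)
  show "phi w (\<lambda>t. F t ^ (CHAR('k) ^ K))" using assms(1) by (rule phi_pow)
  fix t
  show "w ^ K dvd F t ^ (CHAR('k) ^ K) - ind t"
  proof (cases "ind t = 0")
    case True
    thus ?thesis using assms(2)[of t] dvd_pow_frob by simp
  next
    case False
    hence i: "ind t = 1" using assms(3) by blast
    have "F t ^ (CHAR('k) ^ K) = (1 + (F t - 1)) ^ (CHAR('k) ^ K)" by simp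
    also have "\<dots> = 1 + (F t - 1) ^ (CHAR('k) ^ K)" by (simp only: frob power_one)
    finally show ?thesis using i assms(2)[of t] dvd_pow_frob by simp
  qed
qed

lemma indicator:
  "\<exists>f. phi w f \<and> (\<forall>t. w ^ K dvd f t - (if w ^ M dvd t then 1 else 0))"
proof (induction M arbitrary: K)
  case 0
  show ?case by (intro exI[of _ "\<lambda>t. 1"] conjI phi_const) simp
next
  case (Suc M)
  obtain fM where fM: "phi w fM" "\<And>t. w ^ Suc M dvd fM t - (if w ^ M dvd t then 1 else 0)"
    using Suc.IH by blast
  obtain E where E: "E > 0" "\<And>u. \<not> w dvd u \<Longrightarrow> w dvd u ^ E - 1" using fermat_w by blast
  have wdvd: "w dvd w ^ Suc M" by simp
  have div1: "w ^ M dvd fM t * t" for t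
  proof (cases "w ^ M dvd t")
    case True thus ?thesis by simp
  next
    case False
    hence "w ^ Suc M dvd fM t" using fM(2)[of t] by simp
    hence "w ^ M dvd fM t" by (metis dvd_trans le_imp_power_dvd le_SucI order_refl)
    thus ?thesis by simp
  qed
  define G where "G = (\<lambda>t. fM t * t div w ^ M)"
  define F where "F = (\<lambda>t. fM t * (1 - G t ^ E))"
  have phiG: "phi w G" unfolding G_def using div1 by (intro phi_div phi_mult fM(1) phi_id)
  have phiF: "phi w F" unfolding F_def by (intro phi_mult phi_diff phi_pow phiG fM(1) phi_const)
  have key: "w dvd F t - (if w ^ Suc M dvd t then 1 else 0)" for t
  proof (cases "w ^ M dvd t")
    case False
    hence nd: "\<not> w ^ Suc M dvd t" by (metis dvd_mult_left power_Suc2)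
    have "w ^ Suc M dvd fM t" using fM(2)[of t] False by simp
    hence "w dvd fM t" using wdvd dvd_trans by blast
    thus ?thesis using nd by (simp add: F_def)
  next
    case True
    then obtain u where u: "t = w ^ M * u" by (auto elim: dvdE)
    have G_eq: "G t = fM t * u" unfolding G_def u using wpow_nz
      by (metis mult.left_commute nonzero_mult_div_cancel_left)
    have "w ^ Suc M dvd fM t - 1" using fM(2)[of t] True by simp
    hence f1: "w dvd fM t - 1" using wdvd dvd_trans by blast
    have iff: "w ^ Suc M dvd t \<longleftrightarrow> w dvd u" unfolding u using wpow_nz w_nz
      by (simp add: power_Suc2 mult.commute[of "w ^ M" w])
    show ?thesis
    proof (cases "w dvd u")
      case True
      hence "w dvd G t" using G_eq by simp
      hence "w dvd G t ^ E" using E(1) by (metis dvd_power dvd_trans)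
      moreover have "F t - 1 = (fM t - 1) - fM t * G t ^ E" by (simp add: F_def algebra_simps)
      ultimately have "w dvd F t - 1" using f1 by (metis dvd_diff dvd_mult)
      thus ?thesis using True iff by simp
    next
      case False
      have "G t - u = (fM t - 1) * u" by (simp add: G_eq algebra_simps)
      hence "w dvd G t - u" using f1 by simp
      hence "\<not> w dvd G t" using False by (metis dvd_diff_trans diff_zero dvd_0_right dvd_minus_iff minus_diff_eq)
      hence "w dvd G t ^ E - 1" using E(2) by blast
      hence "w dvd F t" unfolding F_def by (metis dvd_minus_iff minus_diff_eq dvd_mult)
      thus ?thesis using False iff by simp
    qed
  qed
  show ?case by (rule boost[OF phiF key]) simp
qed


lemma regroup:
  assumes "1 \<le> m" "m \<le> N"
  shows "sum H (Gm w N) = (\<Sum>g\<in>Gm w m. sum H {h\<in>Gm w N. h mod w ^ m = g})"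
proof -
  have sub: "(\<lambda>h. h mod w ^ m) ` Gm w N \<subseteq> Gm w m" using Gm_proj assms by auto
  show ?thesis using sum.group[OF finite_Gm finite_Gm sub, of H] by simp
qed

lemma carrier_compat:
  assumes "lam \<in> Lambda0_carrier w" "g \<in> Gm w m"
  shows "w ^ m dvd lam m g - (\<Sum>h\<in>{h\<in>Gm w (Suc m). h mod w ^ m = g}. lam (Suc m) h)"
proof -
  have "lam m g = (\<Sum>h\<in>{h\<in>Gm w (Suc m). h mod w ^ m = g}. lam (Suc m) h) mod w ^ m"
    using assms unfolding Lambda0_carrier_def by blast
  thus ?thesis by (simp add: dvd_mod_diff)
qed

lemma ev_cong:
  assumes "j mod CHAR('k) ^ m = j' mod CHAR('k) ^ m"
  shows "w ^ m dvd ev w lam m j - ev w lam m j'"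
  unfolding ev_def
proof (rule sum_dvd_diff)
  fix g assume g: "g \<in> Gm w m"
  have "w ^ m dvd g ^ j - g ^ j'"
    using pow_reduce[OF Gm_dvd[OF g], of m j] pow_reduce[OF Gm_dvd[OF g], of m j'] assms
    by (metis dvd_diff_trans dvd_minus_iff minus_diff_eq)
  hence "w ^ m dvd lam m g * (g ^ j - g ^ j')" by simp
  thus "w ^ m dvd lam m g * g ^ j - lam m g * g ^ j'" by (simp add: right_diff_distrib)
qed

lemma ev_step:
  assumes lam: "lam \<in> Lambda0_carrier w"
  shows "w ^ m dvd ev w lam (Suc m) j - ev w lam m j"
proof (cases "m = 0")
  case True thus ?thesis by simp
next
  case False
  hence m1: "1 \<le> m" by simp
  define A where "A = (\<Sum>h\<in>Gm w (Suc m). lam (Suc m) h * (h mod w ^ m) ^ j)"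
  have d1: "w ^ m dvd ev w lam (Suc m) j - A" unfolding ev_def A_def
  proof (rule sum_dvd_diff)
    fix h
    have "(h mod w ^ m) ^ j mod w ^ m = h ^ j mod w ^ m" by (simp add: power_mod)
    hence "w ^ m dvd h ^ j - (h mod w ^ m) ^ j" using mod_eq_dvd_iff[of "h^j" "w^m" "(h mod w^m)^j"] by simp
    hence "w ^ m dvd lam (Suc m) h * (h ^ j - (h mod w ^ m) ^ j)" by simp
    thus "w ^ m dvd lam (Suc m) h * h ^ j - lam (Suc m) h * (h mod w ^ m) ^ j"
      by (simp add: right_diff_distrib)
  qed
  have "A = (\<Sum>g\<in>Gm w m. \<Sum>h\<in>{h\<in>Gm w (Suc m). h mod w ^ m = g}. lam (Suc m) h * (h mod w ^ m) ^ j)"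
    unfolding A_def by (rule regroup[OF m1]) simp
  also have "\<dots> = (\<Sum>g\<in>Gm w m. \<Sum>h\<in>{h\<in>Gm w (Suc m). h mod w ^ m = g}. lam (Suc m) h * g ^ j)"
    by (rule sum.cong[OF refl], rule sum.cong[OF refl]) simp
  also have "\<dots> = (\<Sum>g\<in>Gm w m. (\<Sum>h\<in>{h\<in>Gm w (Suc m). h mod w ^ m = g}. lam (Suc m) h) * g ^ j)"
    by (simp add: sum_distrib_right)
  finally have A_eq: "A = \<dots>" .
  have d2: "w ^ m dvd A - ev w lam m j" unfolding A_eq ev_def
  proof (rule sum_dvd_diff)
    fix g assume g: "g \<in> Gm w m"
    have "w ^ m dvd ((\<Sum>h\<in>{h\<in>Gm w (Suc m). h mod w ^ m = g}. lam (Suc m) h) - lam m g) * g ^ j"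
      using carrier_compat[OF lam g] by (subst (asm) dvd_diff_commute) (rule dvd_mult2)
    thus "w ^ m dvd (\<Sum>h\<in>{h\<in>Gm w (Suc m). h mod w ^ m = g}. lam (Suc m) h) * g ^ j - lam m g * g ^ j"
      by (simp add: left_diff_distrib)
  qed
  show ?thesis using d1 d2 by (rule dvd_diff_trans)
qed

lemma iota_Ap:
  assumes lam: "lam \<in> Lambda0_carrier w" and s: "s \<in> Zp CHAR('k)"
  shows "iota w lam s \<in> Ap_carrier w"
proof -
  have "(ev w lam (Suc m) (s (Suc m)) mod w ^ Suc m) mod w ^ m = ev w lam m (s m) mod w ^ m" for m
  proof -
    have e1: "(ev w lam (Suc m) (s (Suc m)) mod w ^ Suc m) mod w ^ m = ev w lam (Suc m) (s (Suc m)) mod w ^ m"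
      by (rule mod_mod_cancel) (simp add: le_imp_power_dvd)
    moreover have "w ^ m dvd ev w lam (Suc m) (s (Suc m)) - ev w lam m (s m)"
    proof (rule dvd_diff_trans[OF ev_step[OF lam]])
      show "w ^ m dvd ev w lam m (s (Suc m)) - ev w lam m (s m)"
        using Zp_step[OF s, of m] Zp_less[OF s, of m] by (intro ev_cong) simp
    qed
    hence "ev w lam (Suc m) (s (Suc m)) mod w ^ m = ev w lam m (s m) mod w ^ m"
      by (simp only: mod_eq_dvd_iff)
    with e1 show ?thesis by simp
  qed
  thus ?thesis unfolding iota_eq[OF s] Ap_carrier_def by simp
qed

lemma iota_CZ:
  assumes lam: "lam \<in> Lambda0_carrier w"
  shows "iota w lam \<in> CZ_carrier w"
  unfolding CZ_carrier_def
proof (intro CollectI conjI ballI allI impI)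
  fix s assume "s \<in> Zp CHAR('k)" thus "iota w lam s \<in> Ap_carrier w" using iota_Ap lam by blast
next
  fix s assume "s \<notin> Zp CHAR('k)" thus "iota w lam s = ap_zero" by (simp add: iota_def)
next
  fix s m assume s: "s \<in> Zp CHAR('k)"
  show "\<exists>n. \<forall>t\<in>Zp CHAR('k). t n = s n \<longrightarrow> iota w lam t m = iota w lam s m"
    by (intro exI[of _ m]) (simp add: iota_eq s)
qed


lemma iota_add:
  "iota w (\<lambda>m g. (lam m g + mu m g) mod w ^ m) =
   (\<lambda>s. if s \<in> Zp CHAR('k) then ap_add w (iota w lam s) (iota w mu s) else ap_zero)"
proof (rule ext)
  fix s
  show "iota w (\<lambda>m g. (lam m g + mu m g) mod w ^ m) s =
    (if s \<in> Zp CHAR('k) then ap_add w (iota w lam s) (iota w mu s) else ap_zero)"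
  proof (cases "s \<in> Zp CHAR('k)")
    case False thus ?thesis by (simp add: iota_def)
  next
    case True
    show ?thesis
    proof (simp only: True if_True iota_eq ap_add_def, rule ext)
      fix m
      have "ev w (\<lambda>m g. (lam m g + mu m g) mod w ^ m) m (s m) mod w ^ m
          = (\<Sum>g\<in>Gm w m. (lam m g + mu m g) * g ^ s m) mod w ^ m"
        unfolding ev_def by (rule mod_sum_mult_left)
      also have "\<dots> = (ev w lam m (s m) + ev w mu m (s m)) mod w ^ m"
        by (simp add: ev_def sum.distrib distrib_right)
      also have "\<dots> = (ev w lam m (s m) mod w ^ m + ev w mu m (s m) mod w ^ m) mod w ^ m"
        by (simp add: mod_add_eq)
      finally show "ev w (\<lambda>m g. (lam m g + mu m g) mod w ^ m) m (s m) mod w ^ m =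
         (ev w lam m (s m) mod w ^ m + ev w mu m (s m) mod w ^ m) mod w ^ m" .
    qed
  qed
qed

lemma ev_mult:
  "ev w (\<lambda>m g. if g \<in> Gm w m then
               (\<Sum>a\<in>Gm w m. \<Sum>b\<in>Gm w m.
                   if (a * b) mod w ^ m = g then lam m a * mu m b else 0) mod w ^ m
             else 0) m j mod w ^ m = (ev w lam m j * ev w mu m j) mod w ^ m"
proof -
  let ?G = "Gm w m" and ?W = "w ^ m"
  have "ev w (\<lambda>m g. if g \<in> Gm w m then
               (\<Sum>a\<in>Gm w m. \<Sum>b\<in>Gm w m.
                   if (a * b) mod w ^ m = g then lam m a * mu m b else 0) mod w ^ m
             else 0) m j
      = (\<Sum>g\<in>?G. ((\<Sum>a\<in>?G. \<Sum>b\<in>?G. if (a * b) mod ?W = g then lam m a * mu m b else 0) mod ?W) * g ^ j)"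
    unfolding ev_def by (rule sum.cong) auto
  hence "ev w (\<lambda>m g. if g \<in> Gm w m then
               (\<Sum>a\<in>Gm w m. \<Sum>b\<in>Gm w m.
                   if (a * b) mod w ^ m = g then lam m a * mu m b else 0) mod w ^ m
             else 0) m j mod ?W
      = (\<Sum>g\<in>?G. (\<Sum>a\<in>?G. \<Sum>b\<in>?G. if (a * b) mod ?W = g then lam m a * mu m b else 0) * g ^ j) mod ?W"
    by (simp only: mod_sum_mult_left)
  also have "(\<Sum>g\<in>?G. (\<Sum>a\<in>?G. \<Sum>b\<in>?G. if (a * b) mod ?W = g then lam m a * mu m b else 0) * g ^ j)
      = (\<Sum>g\<in>?G. \<Sum>a\<in>?G. \<Sum>b\<in>?G. (if (a * b) mod ?W = g then lam m a * mu m b else 0) * g ^ j)"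
    by (simp add: sum_distrib_right)
  also have "\<dots> = (\<Sum>a\<in>?G. \<Sum>b\<in>?G. \<Sum>g\<in>?G. (if (a * b) mod ?W = g then lam m a * mu m b else 0) * g ^ j)"
    by (subst sum.swap) (subst (2) sum.swap, rule refl)
  also have "\<dots> = (\<Sum>a\<in>?G. \<Sum>b\<in>?G. lam m a * mu m b * ((a * b) mod ?W) ^ j)"
  proof (rule sum.cong[OF refl], rule sum.cong[OF refl])
    fix a b assume a: "a \<in> ?G" and b: "b \<in> ?G"
    have "(\<Sum>g\<in>?G. (if (a * b) mod ?W = g then lam m a * mu m b else 0) * g ^ j)
        = (\<Sum>g\<in>?G. if g = (a * b) mod ?W then lam m a * mu m b * g ^ j else 0)"
      by (rule sum.cong) auto
    also have "\<dots> = lam m a * mu m b * ((a * b) mod ?W) ^ j"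
      using Gm_mult[OF a b] finite_Gm by (simp add: sum.delta)
    finally show "(\<Sum>g\<in>?G. (if (a * b) mod ?W = g then lam m a * mu m b else 0) * g ^ j)
        = lam m a * mu m b * ((a * b) mod ?W) ^ j" .
  qed
  finally have e1: "ev w (\<lambda>m g. if g \<in> Gm w m then
               (\<Sum>a\<in>Gm w m. \<Sum>b\<in>Gm w m.
                   if (a * b) mod w ^ m = g then lam m a * mu m b else 0) mod w ^ m
             else 0) m j mod ?W = (\<Sum>a\<in>?G. \<Sum>b\<in>?G. lam m a * mu m b * ((a * b) mod ?W) ^ j) mod ?W" .
  have "?W dvd (\<Sum>a\<in>?G. \<Sum>b\<in>?G. lam m a * mu m b * ((a * b) mod ?W) ^ j)
              - (\<Sum>a\<in>?G. \<Sum>b\<in>?G. lam m a * a ^ j * (mu m b * b ^ j))"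
  proof (intro sum_dvd_diff)
    fix a b
    have "((a * b) mod ?W) ^ j mod ?W = (a * b) ^ j mod ?W" by (simp add: power_mod)
    hence "?W dvd ((a * b) mod ?W) ^ j - (a * b) ^ j" by (simp only: mod_eq_dvd_iff)
    hence "?W dvd lam m a * mu m b * (((a * b) mod ?W) ^ j - (a * b) ^ j)" by (rule dvd_mult)
    thus "?W dvd lam m a * mu m b * ((a * b) mod ?W) ^ j - lam m a * a ^ j * (mu m b * b ^ j)"
      by (simp add: algebra_simps power_mult_distrib)
  qed
  hence "(\<Sum>a\<in>?G. \<Sum>b\<in>?G. lam m a * mu m b * ((a * b) mod ?W) ^ j) mod ?W
       = (\<Sum>a\<in>?G. \<Sum>b\<in>?G. lam m a * a ^ j * (mu m b * b ^ j)) mod ?W"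
    by (simp only: mod_eq_dvd_iff)
  also have "(\<Sum>a\<in>?G. \<Sum>b\<in>?G. lam m a * a ^ j * (mu m b * b ^ j)) = ev w lam m j * ev w mu m j"
    unfolding ev_def by (simp add: sum_product)
  finally show ?thesis using e1 by simp
qed

lemma iota_mult:
  "iota w (\<lambda>m g. if g \<in> Gm w m then
               (\<Sum>a\<in>Gm w m. \<Sum>b\<in>Gm w m.
                   if (a * b) mod w ^ m = g then lam m a * mu m b else 0) mod w ^ m
             else 0) =
   (\<lambda>s. if s \<in> Zp CHAR('k) then ap_mult w (iota w lam s) (iota w mu s) else ap_zero)"
proof (rule ext)
  fix s
  show "iota w (\<lambda>m g. if g \<in> Gm w m then
               (\<Sum>a\<in>Gm w m. \<Sum>b\<in>Gm w m.
                   if (a * b) mod w ^ m = g then lam m a * mu m b else 0) mod w ^ m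
             else 0) s =
   (if s \<in> Zp CHAR('k) then ap_mult w (iota w lam s) (iota w mu s) else ap_zero)"
  proof (cases "s \<in> Zp CHAR('k)")
    case False thus ?thesis by (simp add: iota_def)
  next
    case True
    show ?thesis
      by (simp only: True if_True iota_eq ap_mult_def, rule ext) (simp add: ev_mult mod_mult_eq)
  qed
qed

lemma iota_one:
  "iota w (\<lambda>m g. if g \<in> Gm w m \<and> g = 1 mod w ^ m then 1 mod w ^ m else 0) =
   (\<lambda>s. if s \<in> Zp CHAR('k) then ap_one w else ap_zero)"
proof (rule ext)
  fix s
  show "iota w (\<lambda>m g. if g \<in> Gm w m \<and> g = 1 mod w ^ m then 1 mod w ^ m else 0) s =
   (if s \<in> Zp CHAR('k) then ap_one w else ap_zero)"
  proof (cases "s \<in> Zp CHAR('k)")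
    case False thus ?thesis by (simp add: iota_def)
  next
    case True
    show ?thesis
    proof (simp only: True if_True iota_eq ap_one_def, rule ext)
      fix m
      show "ev w (\<lambda>m g. if g \<in> Gm w m \<and> g = 1 mod w ^ m then 1 mod w ^ m else 0) m (s m) mod w ^ m =
          1 mod w ^ m"
      proof (cases "m = 0")
        case True thus ?thesis by simp
      next
        case False
        hence m1: "1 \<le> m" by simp
        have one_in: "1 \<in> Gm w m" using m1 by (simp add: Gm_iff one_mod_wpow)
        have "ev w (\<lambda>m g. if g \<in> Gm w m \<and> g = 1 mod w ^ m then 1 mod w ^ m else 0) m (s m)
            = (\<Sum>g\<in>Gm w m. if g = 1 then 1 else 0)"
          unfolding ev_def by (rule sum.cong) (auto simp: one_mod_wpow[OF m1])
        also have "\<dots> = 1" using one_in finite_Gm by simp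
        finally show ?thesis by simp
      qed
    qed
  qed
qed

lemma U1_Gm:
  assumes u: "u \<in> U1 w" and m: "1 \<le> m"
  shows "u m \<in> Gm w m"
proof -
  have uA: "u \<in> Ap_carrier w" using u by (simp add: U1_def)
  have "u m mod w = 1 mod w" using m
  proof (induction m rule: dec_induct)
    case base thus ?case using u by (simp add: U1_def)
  next
    case (step n)
    have "u (Suc n) mod w = (u (Suc n) mod w ^ n) mod w"
      using step(1) by (simp add: mod_mod_cancel dvd_power)
    also have "\<dots> = u n mod w" using uA by (simp add: Ap_carrier_def)
    finally show ?case using step(3) by simp
  qed
  moreover have "u m mod w ^ m = u m" using uA by (simp add: Ap_carrier_def)
  ultimately show ?thesis by (simp add: Gm_def)
qed

lemma iota_grp:
  assumes u: "u \<in> U1 w"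
  shows "iota w (grp w u) = (\<lambda>s. if s \<in> Zp CHAR('k) then upow w u s else ap_zero)"
proof (rule ext)
  fix s
  show "iota w (grp w u) s = (if s \<in> Zp CHAR('k) then upow w u s else ap_zero)"
  proof (cases "s \<in> Zp CHAR('k)")
    case False thus ?thesis by (simp add: iota_def)
  next
    case True
    show ?thesis
    proof (simp only: True if_True iota_eq upow_def, rule ext)
      fix m
      show "ev w (grp w u) m (s m) mod w ^ m = u m ^ s m mod w ^ m"
      proof (cases "m = 0")
        case True thus ?thesis by simp
      next
        case False
        hence m1: "1 \<le> m" by simp
        have uin: "u m \<in> Gm w m" by (rule U1_Gm[OF u m1])
        have "ev w (grp w u) m (s m) = (\<Sum>g\<in>Gm w m. if g = u m then u m ^ s m else 0)"
          unfolding ev_def grp_def by (rule sum.cong) (auto simp: one_mod_wpow[OF m1])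
        also have "\<dots> = u m ^ s m" using uin finite_Gm by simp
        finally show ?thesis by simp
      qed
    qed
  qed
qed

lemma iota_smult:
  "iota w (lam_smult w a lam) = cz_smult w a (iota w lam)"
proof (rule ext)
  fix s
  show "iota w (lam_smult w a lam) s = cz_smult w a (iota w lam) s"
  proof (cases "s \<in> Zp CHAR('k)")
    case False thus ?thesis by (simp add: iota_def cz_smult_def)
  next
    case True
    show ?thesis
    proof (simp only: True if_True iota_eq cz_smult_def ap_mult_def, rule ext)
      fix m
      have "ev w (lam_smult w a lam) m (s m) mod w ^ m = (\<Sum>g\<in>Gm w m. a m * lam m g * g ^ s m) mod w ^ m"
        unfolding ev_def lam_smult_def by (rule mod_sum_mult_left)
      also have "\<dots> = (a m * ev w lam m (s m)) mod w ^ m"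
        by (simp add: ev_def sum_distrib_left mult.assoc)
      also have "\<dots> = (a m * (ev w lam m (s m) mod w ^ m)) mod w ^ m"
        by (simp add: mod_mult_right_eq)
      finally show "ev w (lam_smult w a lam) m (s m) mod w ^ m = a m * (ev w lam m (s m) mod w ^ m) mod w ^ m" .
    qed
  qed
qed


lemma Zp_of_nat: "(\<lambda>n. j mod CHAR('k) ^ n) \<in> Zp CHAR('k)"
proof -
  have p: "CHAR('k) > 0" using CHAR_gt1[where 'k='k] by simp
  have "j mod CHAR('k) ^ Suc n mod CHAR('k) ^ n = j mod CHAR('k) ^ n" for n
    by (rule mod_mod_cancel) (simp add: le_imp_power_dvd)
  thus ?thesis using p by (simp add: Zp_def)
qed

lemma moment:
  assumes lam: "lam \<in> Lambda0_carrier w" and mu: "mu \<in> Lambda0_carrier w"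
    and eq: "iota w lam = iota w mu"
  shows "w ^ N dvd (\<Sum>h\<in>Gm w N. (lam N h - mu N h) * h ^ j)"
proof -
  define s where "s = (\<lambda>n. j mod CHAR('k) ^ n)"
  have s: "s \<in> Zp CHAR('k)" unfolding s_def by (rule Zp_of_nat)
  have "iota w lam s N = iota w mu s N" using eq by simp
  hence "ev w lam N (s N) mod w ^ N = ev w mu N (s N) mod w ^ N" by (simp add: iota_eq[OF s])
  hence d0: "w ^ N dvd ev w lam N (s N) - ev w mu N (s N)" by (simp only: mod_eq_dvd_iff)
  have sj: "j mod CHAR('k) ^ N = s N mod CHAR('k) ^ N" by (simp add: s_def)
  have d1: "w ^ N dvd ev w lam N j - ev w lam N (s N)" using sj by (rule ev_cong)
  have d2: "w ^ N dvd ev w mu N (s N) - ev w mu N j" using sj[symmetric] by (rule ev_cong)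
  have "w ^ N dvd ev w lam N j - ev w mu N j"
    using dvd_diff_trans[OF d1 dvd_diff_trans[OF d0 d2]] .
  moreover have "(\<Sum>h\<in>Gm w N. (lam N h - mu N h) * h ^ j) = ev w lam N j - ev w mu N j"
    by (simp add: ev_def sum_subtractf left_diff_distrib)
  ultimately show ?thesis by simp
qed

lemma moment_poly:
  assumes lam: "lam \<in> Lambda0_carrier w" and mu: "mu \<in> Lambda0_carrier w"
    and eq: "iota w lam = iota w mu"
  shows "w ^ N dvd (\<Sum>h\<in>Gm w N. (lam N h - mu N h) * poly P h)"
proof -
  have "(\<Sum>h\<in>Gm w N. (lam N h - mu N h) * poly P h)
      = (\<Sum>h\<in>Gm w N. \<Sum>i\<le>degree P. coeff P i * ((lam N h - mu N h) * h ^ i))"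
    by (simp add: poly_altdef sum_distrib_left algebra_simps)
  also have "\<dots> = (\<Sum>i\<le>degree P. coeff P i * (\<Sum>h\<in>Gm w N. (lam N h - mu N h) * h ^ i))"
    by (subst sum.swap) (simp add: sum_distrib_left)
  finally show ?thesis using moment[OF lam mu eq] by (simp add: dvd_sum)
qed

lemma compat_iter:
  assumes lam: "lam \<in> Lambda0_carrier w" and mu: "mu \<in> Lambda0_carrier w"
    and g: "g \<in> Gm w M" and MN: "M \<le> N"
  shows "w ^ M dvd (lam M g - mu M g) -
     (\<Sum>h\<in>Gm w N. if h mod w ^ M = g then lam N h - mu N h else 0)"
  using MN
proof (induction N rule: dec_induct)
  case base
  have "(\<Sum>h\<in>Gm w M. if h mod w ^ M = g then lam M h - mu M h else 0)
      = (\<Sum>h\<in>Gm w M. if h = g then lam M h - mu M h else 0)"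
    by (rule sum.cong) (auto simp: Gm_red)
  also have "\<dots> = lam M g - mu M g" using g finite_Gm by simp
  finally show ?case by simp
next
  case (step n)
  have M1: "1 \<le> M" using Gm_pos[OF g] .
  have n1: "1 \<le> n" using M1 step(1) by simp
  let ?c = "\<lambda>n h. lam n h - mu n h"
  have "(\<Sum>h\<in>Gm w (Suc n). if h mod w ^ M = g then ?c (Suc n) h else 0)
     = (\<Sum>h'\<in>Gm w n. \<Sum>h\<in>{h\<in>Gm w (Suc n). h mod w ^ n = h'}. if h mod w ^ M = g then ?c (Suc n) h else 0)"
    by (rule regroup[OF n1]) simp
  also have "\<dots> = (\<Sum>h'\<in>Gm w n. if h' mod w ^ M = g then (\<Sum>h\<in>{h\<in>Gm w (Suc n). h mod w ^ n = h'}. ?c (Suc n) h) else 0)"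
  proof (rule sum.cong[OF refl])
    fix h' assume "h' \<in> Gm w n"
    have "(\<Sum>h\<in>{h\<in>Gm w (Suc n). h mod w ^ n = h'}. if h mod w ^ M = g then ?c (Suc n) h else 0)
        = (\<Sum>h\<in>{h\<in>Gm w (Suc n). h mod w ^ n = h'}. if h' mod w ^ M = g then ?c (Suc n) h else 0)"
    proof (rule sum.cong[OF refl])
      fix h assume "h \<in> {h\<in>Gm w (Suc n). h mod w ^ n = h'}"
      hence "h mod w ^ n = h'" by simp
      moreover have "h mod w ^ n mod w ^ M = h mod w ^ M"
        using step(1) by (simp add: mod_mod_cancel le_imp_power_dvd)
      ultimately show "(if h mod w ^ M = g then ?c (Suc n) h else 0) = (if h' mod w ^ M = g then ?c (Suc n) h else 0)"
        by simp
    qed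
    thus "(\<Sum>h\<in>{h\<in>Gm w (Suc n). h mod w ^ n = h'}. if h mod w ^ M = g then ?c (Suc n) h else 0)
        = (if h' mod w ^ M = g then (\<Sum>h\<in>{h\<in>Gm w (Suc n). h mod w ^ n = h'}. ?c (Suc n) h) else 0)"
      by simp
  qed
  finally have eqS: "(\<Sum>h\<in>Gm w (Suc n). if h mod w ^ M = g then ?c (Suc n) h else 0) = \<dots>" .
  have "w ^ M dvd (\<Sum>h\<in>Gm w n. if h mod w ^ M = g then ?c n h else 0)
     - (\<Sum>h'\<in>Gm w n. if h' mod w ^ M = g then (\<Sum>h\<in>{h\<in>Gm w (Suc n). h mod w ^ n = h'}. ?c (Suc n) h) else 0)"
  proof (rule sum_dvd_diff)
    fix h' assume h': "h' \<in> Gm w n"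
    have c1: "w ^ n dvd lam n h' - (\<Sum>h\<in>{h\<in>Gm w (Suc n). h mod w ^ n = h'}. lam (Suc n) h)"
      by (rule carrier_compat[OF lam h'])
    have c2: "w ^ n dvd mu n h' - (\<Sum>h\<in>{h\<in>Gm w (Suc n). h mod w ^ n = h'}. mu (Suc n) h)"
      by (rule carrier_compat[OF mu h'])
    from c1 c2 have "w ^ n dvd (lam n h' - (\<Sum>h\<in>{h\<in>Gm w (Suc n). h mod w ^ n = h'}. lam (Suc n) h))
       - (mu n h' - (\<Sum>h\<in>{h\<in>Gm w (Suc n). h mod w ^ n = h'}. mu (Suc n) h))" by (rule dvd_diff)
    moreover have "(lam n h' - (\<Sum>h\<in>{h\<in>Gm w (Suc n). h mod w ^ n = h'}. lam (Suc n) h))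
       - (mu n h' - (\<Sum>h\<in>{h\<in>Gm w (Suc n). h mod w ^ n = h'}. mu (Suc n) h))
       = ?c n h' - (\<Sum>h\<in>{h\<in>Gm w (Suc n). h mod w ^ n = h'}. ?c (Suc n) h)"
      by (simp add: sum_subtractf)
    ultimately have "w ^ n dvd ?c n h' - (\<Sum>h\<in>{h\<in>Gm w (Suc n). h mod w ^ n = h'}. ?c (Suc n) h)"
      by simp
    hence "w ^ M dvd ?c n h' - (\<Sum>h\<in>{h\<in>Gm w (Suc n). h mod w ^ n = h'}. ?c (Suc n) h)"
      by (rule dvd_trans[OF le_imp_power_dvd[OF step(1)]])
    thus "w ^ M dvd (if h' mod w ^ M = g then ?c n h' else 0) -
          (if h' mod w ^ M = g then (\<Sum>h\<in>{h\<in>Gm w (Suc n). h mod w ^ n = h'}. ?c (Suc n) h) else 0)"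
      by simp
  qed
  from dvd_diff_trans[OF step(3) this] show ?case by (simp only: eqS)
qed

lemma iota_inj:
  assumes lam: "lam \<in> Lambda0_carrier w" and mu: "mu \<in> Lambda0_carrier w"
    and eq: "iota w lam = iota w mu"
  shows "lam = mu"
proof (rule ext, rule ext)
  fix M g
  show "lam M g = mu M g"
  proof (cases "g \<in> Gm w M")
    case False thus ?thesis using lam mu by (simp add: Lambda0_carrier_def)
  next
    case True
    obtain f where f: "phi w f" "\<And>t. w ^ M dvd f t - (if w ^ M dvd t then 1 else 0)"
      using indicator[of M M] by blast
    have "phi w (\<lambda>t. f (t - g))" using f(1) by (rule phi_shift)
    then obtain P e where P: "\<And>t. poly P t = w ^ e * f (t - g)" unfolding phi_def by blast
    define N where "N = M + e"
    let ?c = "\<lambda>h. lam N h - mu N h"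
    define T where "T = (\<Sum>h\<in>Gm w N. ?c h * f (h - g))"
    have "w ^ N dvd (\<Sum>h\<in>Gm w N. ?c h * poly P h)" by (rule moment_poly[OF lam mu eq])
    also have "(\<Sum>h\<in>Gm w N. ?c h * poly P h) = w ^ e * T"
      by (simp add: T_def P sum_distrib_left algebra_simps)
    finally have "w ^ e * w ^ M dvd w ^ e * T" by (simp add: N_def power_add)
    hence dT: "w ^ M dvd T" using wpow_nz[of e] by (subst (asm) dvd_times_left_cancel_iff)
    have dTS: "w ^ M dvd T - (\<Sum>h\<in>Gm w N. if h mod w ^ M = g then ?c h else 0)"
      unfolding T_def
    proof (rule sum_dvd_diff)
      fix h
      have "h mod w ^ M = g \<longleftrightarrow> w ^ M dvd h - g"
        using Gm_red[OF True] mod_eq_dvd_iff[of h "w ^ M" g] by simp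
      hence "(if h mod w ^ M = g then ?c h else 0) = ?c h * (if w ^ M dvd h - g then 1 else 0)"
        by simp
      moreover have "w ^ M dvd ?c h * (f (h - g) - (if w ^ M dvd h - g then 1 else 0))"
        using f(2)[of "h - g"] by (rule dvd_mult)
      ultimately show "w ^ M dvd ?c h * f (h - g) - (if h mod w ^ M = g then ?c h else 0)"
        by (simp add: right_diff_distrib)
    qed
    define S where "S = (\<Sum>h\<in>Gm w N. if h mod w ^ M = g then ?c h else 0)"
    have dX: "w ^ M dvd (lam M g - mu M g) - S"
      unfolding S_def using compat_iter[OF lam mu True, of N] by (simp add: N_def)
    have "lam M g - mu M g = ((lam M g - mu M g) - S) - (T - S) + T" by simp
    moreover have "w ^ M dvd ((lam M g - mu M g) - S) - (T - S) + T"
      by (rule dvd_add[OF dvd_diff[OF dX dTS[folded S_def]] dT])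
    ultimately have "w ^ M dvd lam M g - mu M g" by simp
    hence "lam M g mod w ^ M = mu M g mod w ^ M" by (simp only: mod_eq_dvd_iff)
    moreover have "lam M g mod w ^ M = lam M g" "mu M g mod w ^ M = mu M g"
      using lam mu by (simp_all add: Lambda0_carrier_def)
    ultimately show ?thesis by simp
  qed
qed

end


lemma zero_carrier: "(\<lambda>m g. 0) \<in> Lambda0_carrier w"
  by (simp add: Lambda0_carrier_def)

lemma fk_ev: "fk w k lam m = ev w lam m (k m) mod w ^ m"
  by (simp add: fk_def ev_def)

theorem mainTheorem9:
  fixes w :: "'k::{finite,field} poly"
  assumes "lead_coeff w = 1" and "irreducible w"
  shows "iota w \<in> ring_hom (Lambda0 w) (CZ w)
       \<and> inj_on (iota w) (carrier (Lambda0 w))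
       \<and> (\<forall>u\<in>U1 w. iota w (grp w u) = (\<lambda>s. if s \<in> Zp CHAR('k) then upow w u s else ap_zero))
       \<and> (\<forall>a\<in>Ap_carrier w. \<forall>lam\<in>carrier (Lambda0 w).
            iota w (lam_smult w a lam) = cz_smult w a (iota w lam))
       \<and> (\<forall>I. dense_in_Zp CHAR('k) I \<longrightarrow>
            (\<Inter>k\<in>I. Pk w k) = {\<zero>\<^bsub>Lambda0 w\<^esub>})"
proof (intro conjI ballI allI impI)
  show "iota w \<in> ring_hom (Lambda0 w) (CZ w)"
    unfolding ring_hom_def Lambda0_def CZ_def
    using iota_CZ[OF assms] iota_mult[OF assms] iota_add[OF assms] iota_one[OF assms]
    by (simp add: Pi_def)
  show "inj_on (iota w) (carrier (Lambda0 w))"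
    unfolding inj_on_def Lambda0_def using iota_inj[OF assms] by simp
  fix u assume "u \<in> U1 w"
  thus "iota w (grp w u) = (\<lambda>s. if s \<in> Zp CHAR('k) then upow w u s else ap_zero)"
    by (rule iota_grp[OF assms])
next
  fix a lam
  show "iota w (lam_smult w a lam) = cz_smult w a (iota w lam)" by (rule iota_smult[OF assms])
next
  fix I assume dense: "dense_in_Zp CHAR('k) I"
  have zeroZ: "(\<lambda>n. 0) \<in> Zp CHAR('k)" using CHAR_gt1[where 'k='k] by (simp add: Zp_def)
  then obtain k0 where "k0 \<in> I" using dense unfolding dense_in_Zp_def by blast
  hence Ine: "I \<noteq> {}" by blast
  have z: "\<zero>\<^bsub>Lambda0 w\<^esub> = (\<lambda>m g. 0)" by (simp add: Lambda0_def)
  have zP: "(\<lambda>m g. 0) \<in> Pk w k" for k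
    using zero_carrier by (simp add: Pk_def fk_def ap_zero_def)
  show "(\<Inter>k\<in>I. Pk w k) = {\<zero>\<^bsub>Lambda0 w\<^esub>}"
  proof
    show "{\<zero>\<^bsub>Lambda0 w\<^esub>} \<subseteq> (\<Inter>k\<in>I. Pk w k)" using zP z by auto
  next
    show "(\<Inter>k\<in>I. Pk w k) \<subseteq> {\<zero>\<^bsub>Lambda0 w\<^esub>}"
    proof
      fix lam assume lamI: "lam \<in> (\<Inter>k\<in>I. Pk w k)"
      have lamC: "lam \<in> Lambda0_carrier w" using lamI Ine by (auto simp: Pk_def)
      have fk0: "\<And>k. k \<in> I \<Longrightarrow> fk w k lam = ap_zero" using lamI by (auto simp: Pk_def)
      have "iota w lam = iota w (\<lambda>m g. 0)"
      proof (rule ext)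
        fix s
        show "iota w lam s = iota w (\<lambda>m g. 0) s"
        proof (cases "s \<in> Zp CHAR('k)")
          case False thus ?thesis by (simp add: iota_def)
        next
          case True
          show ?thesis
          proof (simp only: iota_eq[OF True], rule ext)
            fix m
            obtain k where k: "k \<in> I" "k m = s m" using dense True unfolding dense_in_Zp_def by blast
            have "ev w lam m (s m) mod w ^ m = fk w k lam m" by (simp add: fk_ev k(2))
            also have "\<dots> = 0" using fk0[OF k(1)] by (simp add: ap_zero_def)
            finally show "ev w lam m (s m) mod w ^ m = ev w (\<lambda>m g. 0) m (s m) mod w ^ m"
              by (simp add: ev_def)
          qed
        qed
      qed
      hence "lam = (\<lambda>m g. 0)" by (rule iota_inj[OF assms lamC zero_carrier])
      thus "lam \<in> {\<zero>\<^bsub>Lambda0 w\<^esub>}" using z by simp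
    qed
  qed
qed

end
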